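(* Let $\{X(s)\}_{s\ge 0}$ be a centered Gaussian process with continuous sample paths whose covariance kernel $R(s,t)=\mathbb{E}[X(s)X(t)]$ satisfies: there exists $\rho>0$ such that $R(cs,ct)=c^{2\rho}R(s,t)$ for all $c>0$ and $s,t>0$. Suppose moreover that for all sufficiently large $\alpha>1$, setting $t_n=\alpha^n$ and $\gamma_n=\mathrm{Var}(X(t_{n+1})-X(t_n))$, one has \[ \mathbb{P}\Big(X(t_{n+1})-X(t_n)>\big(2\gamma_n\log\log t_{n+1}\big)^{1/2}\ \text{for infinitely many } n\Big)=1. \] Then, with $\sigma:=R(1,1)^{1/2}$, \[ \limsup_{s\to\infty}\frac{X(s)}{\sqrt{2s^{2\rho}\log\log s}}\ge\sigma\quad\text{almost surely}. \] *)

theory Defs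
  imports "HOL-Probability.Probability"
begin

definition centered_normal_rv :: "'a measure \<Rightarrow> ('a \<Rightarrow> real) \<Rightarrow> bool" where
  "centered_normal_rv M Y \<longleftrightarrow> Y \<in> borel_measurable M \<and>
     ((AE \<omega> in M. Y \<omega> = 0) \<or>
      (\<exists>\<sigma>>0. distributed M lborel Y (normal_density 0 \<sigma>)))"

definition centered_gaussian_process ::
    "'a measure \<Rightarrow> (real \<Rightarrow> 'a \<Rightarrow> real) \<Rightarrow> real set \<Rightarrow> bool" where
  "centered_gaussian_process M X I \<longleftrightarrow>
     (\<forall>ts cs. set ts \<subseteq> I \<longrightarrow> length cs = length ts \<longrightarrow>
        centered_normal_rv M (\<lambda>\<omega>. \<Sum>i<length ts. cs ! i * X (ts ! i) \<omega>))"

definition cov_kernel :: "'a measure \<Rightarrow> (real \<Rightarrow> 'a \<Rightarrow> real) \<Rightarrow> real \<Rightarrow> real \<Rightarrow> real" where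
  "cov_kernel M X s t = (\<integral>\<omega>. X s \<omega> * X t \<omega> \<partial>M)"

definition rv_variance :: "'a measure \<Rightarrow> ('a \<Rightarrow> real) \<Rightarrow> real" where
  "rv_variance M Y = (\<integral>\<omega>. (Y \<omega> - (\<integral>\<omega>'. Y \<omega>' \<partial>M))\<^sup>2 \<partial>M)"

end

theory Submission
  imports Defs "HOL-Real_Asymp.Real_Asymp"
begin


lemma std_tail:
  assumes D: "distributed M lborel Z std_normal_density" and x: "x \<ge> 1"
  shows "emeasure M {\<omega>\<in>space M. Z \<omega> \<ge> x} \<le> ennreal (exp (-x\<^sup>2/2))"
proof -
  have "{\<omega>\<in>space M. Z \<omega> \<ge> x} = Z -` {x..} \<inter> space M" by auto
  then have "emeasure M {\<omega>\<in>space M. Z \<omega> \<ge> x} = (\<integral>\<^sup>+t. ennreal (std_normal_density t) * indicator {x..} t \<partial>lborel)"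
    using distributed_emeasure[OF D, of "{x..}"] by simp
  also have "\<dots> \<le> (\<integral>\<^sup>+t. ennreal (t * std_normal_density t) * indicator {x..} t \<partial>lborel)"
  proof (rule nn_integral_mono)
    fix t :: real
    show "ennreal (std_normal_density t) * indicator {x..} t \<le> ennreal (t * std_normal_density t) * indicator {x..} t"
    proof (cases "x \<le> t")
      case True
      then have "std_normal_density t \<le> t * std_normal_density t"
        using x normal_density_nonneg[of 0 1 t] by (metis mult_le_cancel_right1 order_trans linorder_not_le less_eq_real_def)
      then show ?thesis using True by (auto intro: ennreal_leI)
    qed simp
  qed
  also have "\<dots> = ennreal (0 - (- (1 / sqrt (2 * pi)) * exp (- x\<^sup>2 / 2)))"
  proof (rule nn_integral_FTC_atLeast)
    show "(\<lambda>t. t * std_normal_density t) \<in> borel_measurable borel" by measurable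
    show "\<And>t. x \<le> t \<Longrightarrow> ((\<lambda>t. - (1 / sqrt (2 * pi)) * exp (- t\<^sup>2 / 2)) has_real_derivative t * std_normal_density t) (at t)"
      by (auto intro!: derivative_eq_intros simp: std_normal_density_def field_simps)
    show "\<And>t. x \<le> t \<Longrightarrow> 0 \<le> t * std_normal_density t" using x by simp
    have "((\<lambda>t::real. exp (- t\<^sup>2 / 2)) \<longlongrightarrow> 0) at_top"
      by real_asymp
    then show "((\<lambda>t. - (1 / sqrt (2 * pi)) * exp (- t\<^sup>2 / 2)) \<longlongrightarrow> 0) at_top"
      using tendsto_mult_right_zero by fastforce
  qed
  also have "\<dots> \<le> ennreal (exp (-x\<^sup>2/2))"
  proof (rule ennreal_leI)
    have "1 \<le> sqrt (2 * pi)" using pi_gt3 by simp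
    then have "1 / sqrt (2 * pi) \<le> 1" by simp
    then show "0 - (- (1 / sqrt (2 * pi)) * exp (- x\<^sup>2 / 2)) \<le> exp (-x\<^sup>2/2)"
      using mult_left_le_one_le[of "exp (- x\<^sup>2 / 2)" "1 / sqrt (2 * pi)"] by simp
  qed
  finally show ?thesis .
qed

context prob_space begin

lemma cn_facts:
  assumes "centered_normal_rv M Y"
  shows "integrable M Y" "expectation Y = 0" "integrable M (\<lambda>\<omega>. (Y \<omega>)\<^sup>2)"
proof -
  have Ym[measurable]: "Y \<in> borel_measurable M" using assms unfolding centered_normal_rv_def by auto
  have "(integrable M Y \<and> expectation Y = 0 \<and> integrable M (\<lambda>\<omega>. (Y \<omega>)\<^sup>2))"
  proof (cases "AE \<omega> in M. Y \<omega> = 0")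
    case True
    have i1: "integrable M Y" using integrable_cong_AE[of Y M "\<lambda>_. 0"] True by auto
    have i2: "integrable M (\<lambda>\<omega>. (Y \<omega>)\<^sup>2)" using integrable_cong_AE[of "\<lambda>\<omega>. (Y \<omega>)\<^sup>2" M "\<lambda>_. 0"] True by auto
    have "expectation Y = expectation (\<lambda>_. 0)" by (rule integral_cong_AE) (use True in auto)
    then show ?thesis using i1 i2 by simp
  next
    case False
    then obtain s where s: "s > 0" and D: "distributed M lborel Y (normal_density 0 s)"
      using assms unfolding centered_normal_rv_def by auto
    have "integrable lborel (\<lambda>x. normal_density 0 s x * x)"
      by (rule integrable_normal_moment_nz_1) (use s in auto)
    then have i1: "integrable M Y" using distributed_integrable[OF D, of "\<lambda>x. x"] by simp
    have "integrable lborel (\<lambda>x. normal_density 0 s x * x\<^sup>2)"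
      using integrable_normal_moment[where \<mu>=0 and \<sigma>=s and k=2] s by simp
    then have i2: "integrable M (\<lambda>\<omega>. (Y \<omega>)\<^sup>2)" using distributed_integrable[OF D, of "\<lambda>x. x\<^sup>2"] by simp
    show ?thesis using i1 i2 normal_distributed_expectation[OF s D] by simp
  qed
  then show "integrable M Y" "expectation Y = 0" "integrable M (\<lambda>\<omega>. (Y \<omega>)\<^sup>2)" by auto
qed

lemma normal_tail:
  assumes "centered_normal_rv M Y" and x: "x \<ge> 1"
  shows "prob {\<omega>\<in>space M. \<bar>Y \<omega>\<bar> > x * sqrt (expectation (\<lambda>\<omega>. (Y \<omega>)\<^sup>2))} \<le> 2 * exp (-x\<^sup>2/2)"
proof -
  have Ym[measurable]: "Y \<in> borel_measurable M" using assms unfolding centered_normal_rv_def by auto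
  let ?S = "{\<omega>\<in>space M. \<bar>Y \<omega>\<bar> > x * sqrt (expectation (\<lambda>\<omega>. (Y \<omega>)\<^sup>2))}"
  have Sm: "?S \<in> events" by measurable
  show ?thesis
  proof (cases "AE \<omega> in M. Y \<omega> = 0")
    case True
    have "0 \<le> expectation (\<lambda>\<omega>. (Y \<omega>)\<^sup>2)" by (rule integral_nonneg_AE) simp
    then have "0 \<le> x * sqrt (expectation (\<lambda>\<omega>. (Y \<omega>)\<^sup>2))" using x by simp
    have "AE \<omega> in M. \<omega> \<notin> ?S"
      using True by eventually_elim (use \<open>0 \<le> x * _\<close> in auto)
    then have "prob ?S = 0" using prob_eq_0[OF Sm] by simp
    then show ?thesis by simp
  next
    case False
    then obtain s where s: "s > 0" and D: "distributed M lborel Y (normal_density 0 s)"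
      using assms unfolding centered_normal_rv_def by auto
    have "variance Y = s\<^sup>2" by (rule normal_distributed_variance[OF s D])
    then have "expectation (\<lambda>\<omega>. (Y \<omega>)\<^sup>2) = s\<^sup>2" using cn_facts(2)[OF assms(1)] by simp
    then have sq: "sqrt (expectation (\<lambda>\<omega>. (Y \<omega>)\<^sup>2)) = s" using s by simp
    have DZ: "distributed M lborel (\<lambda>\<omega>. Y \<omega> / s) std_normal_density"
      using normal_standard_normal_convert[OF s, of Y 0] D by simp
    have DZ': "distributed M lborel (\<lambda>\<omega>. 0 + (-1) * (Y \<omega> / s)) (normal_density (0 + (-1) * 0) (\<bar>-1\<bar> * 1))"
      by (rule normal_density_affine[OF DZ]) auto
    then have DZ2: "distributed M lborel (\<lambda>\<omega>. - (Y \<omega> / s)) std_normal_density" by simp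
    let ?A = "{\<omega>\<in>space M. Y \<omega> / s \<ge> x}"
    let ?B = "{\<omega>\<in>space M. - (Y \<omega> / s) \<ge> x}"
    have Am: "?A \<in> events" and Bm: "?B \<in> events" by measurable
    have sub: "?S \<subseteq> ?A \<union> ?B"
    proof
      fix \<omega> assume "\<omega> \<in> ?S"
      then have "\<omega> \<in> space M" "\<bar>Y \<omega>\<bar> > x * s" using sq by auto
      then show "\<omega> \<in> ?A \<union> ?B" using s by (auto simp: field_simps abs_if split: if_splits)
    qed
    have pA: "prob ?A \<le> exp (-x\<^sup>2/2)"
      using std_tail[OF DZ x] by (simp add: emeasure_eq_measure)
    have pB: "prob ?B \<le> exp (-x\<^sup>2/2)"
      using std_tail[OF DZ2 x] by (simp add: emeasure_eq_measure)
    have "prob ?S \<le> prob (?A \<union> ?B)" using sub Am Bm by (intro finite_measure_mono) auto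
    also have "\<dots> \<le> prob ?A + prob ?B" using Am Bm by (intro measure_subadditive) auto
    finally show ?thesis using pA pB by simp
  qed
qed

end



lemma limsup_freq:
  fixes f :: "real \<Rightarrow> real" and h :: "nat \<Rightarrow> real"
  assumes h: "filterlim h at_top sequentially"
    and fr: "\<exists>\<^sub>F n in sequentially. c \<le> f (h n)"
  shows "ereal c \<le> Limsup at_top (\<lambda>s. ereal (f s))"
  unfolding Limsup_def
proof (rule INF_greatest)
  fix P :: "real \<Rightarrow> bool" assume "P \<in> {P. eventually P at_top}"
  then have "eventually P at_top" by simp
  then have "eventually (\<lambda>n. P (h n)) sequentially"
    using h by (simp add: filterlim_iff)
  from frequently_eventually_frequently[OF fr this]
  obtain n where "c \<le> f (h n)" "P (h n)" by (auto dest: frequently_ex)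
  then show "ereal c \<le> (SUP x\<in>Collect P. ereal (f x))"
    by (intro SUP_upper2[of "h n"]) auto
qed

context
  fixes M :: "'a measure" and X :: "real \<Rightarrow> 'a \<Rightarrow> real"
  assumes P: "prob_space M" and G: "centered_gaussian_process M X {0..}"
begin

interpretation prob_space M by (rule P)

lemma gp_lin2:
  assumes "s \<ge> 0" "t \<ge> 0"
  shows "centered_normal_rv M (\<lambda>\<omega>. a * X s \<omega> + b * X t \<omega>)"
proof -
  have h: "set [s,t] \<subseteq> {0..}" using assms by auto
  have "\<forall>cs. length cs = length [s,t] \<longrightarrow> centered_normal_rv M (\<lambda>\<omega>. \<Sum>i<length [s,t]. cs ! i * X ([s,t] ! i) \<omega>)"
    using G h unfolding centered_gaussian_process_def by blast
  from this[rule_format, of "[a,b]"] show ?thesis by (simp add: numeral_2_eq_2 lessThan_Suc add.commute)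
qed

lemma gp_meas[measurable]:
  assumes "t \<ge> 0" shows "X t \<in> borel_measurable M"
proof -
  have "centered_normal_rv M (\<lambda>\<omega>. 1 * X t \<omega> + 0 * X t \<omega>)" using gp_lin2 assms by blast
  then show ?thesis unfolding centered_normal_rv_def by simp
qed

lemma gp_cn:
  assumes "t \<ge> 0" shows "centered_normal_rv M (X t)"
proof -
  have "centered_normal_rv M (\<lambda>\<omega>. 1 * X t \<omega> + 0 * X t \<omega>)" using gp_lin2 assms by blast
  then show ?thesis by simp
qed

lemma gp_diff_cn:
  assumes "s \<ge> 0" "t \<ge> 0" shows "centered_normal_rv M (\<lambda>\<omega>. X t \<omega> - X s \<omega>)"
proof -
  have "centered_normal_rv M (\<lambda>\<omega>. 1 * X t \<omega> + (-1) * X s \<omega>)" using gp_lin2 assms by blast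
  then show ?thesis by simp
qed

lemma gp_sq_int:
  assumes "t \<ge> 0" shows "integrable M (\<lambda>\<omega>. X t \<omega> * X t \<omega>)"
  using cn_facts(3)[OF gp_cn[OF assms]] by (simp add: power2_eq_square)

lemma gp_prod_int:
  assumes "s \<ge> 0" "t \<ge> 0" shows "integrable M (\<lambda>\<omega>. X s \<omega> * X t \<omega>)"
proof -
  have "integrable M (\<lambda>\<omega>. (1 * X s \<omega> + 1 * X t \<omega>)\<^sup>2)"
    using cn_facts(3)[OF gp_lin2[OF assms]] by blast
  then have "integrable M (\<lambda>\<omega>. ((X s \<omega> + X t \<omega>)\<^sup>2 - X s \<omega> * X s \<omega> - X t \<omega> * X t \<omega>) / 2)"
    using gp_sq_int assms by auto
  also have "(\<lambda>\<omega>. ((X s \<omega> + X t \<omega>)\<^sup>2 - X s \<omega> * X s \<omega> - X t \<omega> * X t \<omega>) / 2) = (\<lambda>\<omega>. X s \<omega> * X t \<omega>)"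
    by (auto simp: power2_eq_square algebra_simps)
  finally show ?thesis .
qed

lemma gp_var_diff:
  assumes "s \<ge> 0" "t \<ge> 0"
  shows "rv_variance M (\<lambda>\<omega>. X t \<omega> - X s \<omega>) = cov_kernel M X t t - 2 * cov_kernel M X t s + cov_kernel M X s s"
proof -
  have e0: "expectation (\<lambda>\<omega>. X t \<omega> - X s \<omega>) = 0" using cn_facts(2)[OF gp_diff_cn[OF assms]] .
  have "rv_variance M (\<lambda>\<omega>. X t \<omega> - X s \<omega>) =
        expectation (\<lambda>\<omega>. X t \<omega> * X t \<omega> - 2 * (X t \<omega> * X s \<omega>) + X s \<omega> * X s \<omega>)"
    unfolding rv_variance_def e0 by (intro Bochner_Integration.integral_cong) (auto simp: power2_eq_square algebra_simps)
  also have "\<dots> = cov_kernel M X t t - 2 * cov_kernel M X t s + cov_kernel M X s s"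
    unfolding cov_kernel_def using gp_sq_int gp_prod_int assms by (simp add: integral_add integral_diff)
  finally show ?thesis .
qed

lemma gp_cov_bound:
  assumes "s \<ge> 0" "t \<ge> 0" "l > 0"
  shows "\<bar>cov_kernel M X s t\<bar> \<le> (l * cov_kernel M X s s + cov_kernel M X t t / l) / 2"
proof -
  have pw: "\<bar>x * y\<bar> \<le> (l * (x * x) + y * y / l) / 2" for x y :: real
  proof -
    have "0 \<le> (l * \<bar>x\<bar> - \<bar>y\<bar>)\<^sup>2 / l" using assms by simp
    then show ?thesis using assms by (simp add: power2_eq_square field_simps abs_mult)
  qed
  have pw1: "x * y \<le> (l * (x * x) + y * y / l) / 2" for x y :: real
    using pw[of x y] by linarith
  have pw2: "- (x * y) \<le> (l * (x * x) + y * y / l) / 2" for x y :: real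
    using pw[of x y] by linarith
  have i: "integrable M (\<lambda>\<omega>. (l * (X s \<omega> * X s \<omega>) + X t \<omega> * X t \<omega> / l) / 2)"
    using gp_sq_int assms by auto
  have "cov_kernel M X s t \<le> expectation (\<lambda>\<omega>. (l * (X s \<omega> * X s \<omega>) + X t \<omega> * X t \<omega> / l) / 2)"
    unfolding cov_kernel_def
    by (rule integral_mono[OF gp_prod_int[OF assms(1,2)] i]) (use pw1 in auto)
  moreover have "- cov_kernel M X s t \<le> expectation (\<lambda>\<omega>. (l * (X s \<omega> * X s \<omega>) + X t \<omega> * X t \<omega> / l) / 2)"
    unfolding cov_kernel_def integral_minus[symmetric]
    by (rule integral_mono[OF _ i]) (use pw2 gp_prod_int[OF assms(1,2)] in auto)
  moreover have "expectation (\<lambda>\<omega>. (l * (X s \<omega> * X s \<omega>) + X t \<omega> * X t \<omega> / l) / 2) = (l * cov_kernel M X s s + cov_kernel M X t t / l) / 2"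
    unfolding cov_kernel_def using gp_sq_int assms by simp
  ultimately show ?thesis by linarith
qed

lemma gp_cov_nonneg: "0 \<le> cov_kernel M X t t"
  unfolding cov_kernel_def by (rule integral_nonneg_AE) simp

end



lemma powr_2x: "(x::real) > 0 \<Longrightarrow> x powr (2 * r) = (x powr r)\<^sup>2"
proof -
  assume x: "x > 0"
  have "x powr (2 * r) = x powr (r + r)" by (simp only: mult_2)
  also have "\<dots> = x powr r * x powr r" by (rule powr_add)
  finally show ?thesis by (simp only: power2_eq_square)
qed

lemma exp_m2ln: "(y::real) > 0 \<Longrightarrow> exp (- (2 * ln y)) = inverse (y\<^sup>2)"
proof -
  assume y: "y > 0"
  have "exp (2 * ln y) = exp (ln y) * exp (ln y)" by (simp only: mult_2 exp_add)
  then have "exp (2 * ln y) = y\<^sup>2" using y by (simp add: power2_eq_square)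
  then show ?thesis by (simp add: exp_minus)
qed

lemma key_ineq:
  fixes B a S s \<sigma> sv x0 x1 :: real
  assumes B: "B > 0" and a: "a > 1" and sg: "\<sigma> \<ge> 0" and sv: "sv \<ge> \<sigma> * (a - 1)"
    and s: "0 \<le> s" "s \<le> S" and S: "S > 0"
    and h0: "\<bar>x0\<bar> \<le> 2 * s * (B * \<sigma>)" and h1: "x1 - x0 > sqrt 2 * B * sv * S"
  shows "\<sigma> * (1 - (1 + sqrt 2) / a) \<le> x1 / (sqrt 2 * B * a * S)"
proof -
  have k: "0 \<le> sqrt 2 * B * S" using B S by simp
  have e1: "sqrt 2 * B * S * (\<sigma> * (a - 1)) \<le> sqrt 2 * B * S * sv" by (rule mult_left_mono[OF sv k])
  have e2: "2 * s * (B * \<sigma>) \<le> 2 * S * (B * \<sigma>)" using s B sg by (intro mult_right_mono) auto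
  have x1: "x1 \<ge> sqrt 2 * B * S * (\<sigma> * (a - 1)) - 2 * S * (B * \<sigma>)"
    using h0 h1 e1 e2 by (simp add: abs_le_iff algebra_simps)
  have sq: "sqrt 2 * sqrt 2 = 2" by simp
  have eq: "\<sigma> * (1 - (1 + sqrt 2) / a) * (sqrt 2 * B * a * S) = sqrt 2 * B * S * (\<sigma> * (a - 1)) - 2 * S * (B * \<sigma>)"
  proof -
    have "\<sigma> * (1 - (1 + sqrt 2) / a) * (sqrt 2 * B * a * S) = \<sigma> * (a - (1 + sqrt 2)) * (sqrt 2 * B * S)"
      using a by (simp add: field_simps)
    also have "\<dots> = sqrt 2 * B * S * (\<sigma> * (a - 1)) - (sqrt 2 * sqrt 2) * S * (B * \<sigma>)"
      by (simp only: algebra_simps)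
    finally show ?thesis by (simp only: sq)
  qed
  have pos: "sqrt 2 * B * a * S > 0" using B a S by simp
  show ?thesis using x1 eq pos by (simp add: le_divide_eq)
qed

context
  fixes M :: "'a measure" and X :: "real \<Rightarrow> 'a \<Rightarrow> real" and \<rho> :: real
  assumes P: "prob_space M" and G: "centered_gaussian_process M X {0..}"
    and rho: "\<rho> > 0"
    and scal: "\<forall>c>0. \<forall>s>0. \<forall>t>0. cov_kernel M X (c * s) (c * t) = c powr (2 * \<rho>) * cov_kernel M X s t"
begin

interpretation prob_space M by (rule P)

lemma scal': "c > 0 \<Longrightarrow> s > 0 \<Longrightarrow> t > 0 \<Longrightarrow> cov_kernel M X (c * s) (c * t) = (c powr \<rho>)\<^sup>2 * cov_kernel M X s t"
proof -
  assume "c > 0" "s > 0" "t > 0"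
  then have "cov_kernel M X (c * s) (c * t) = c powr (2 * \<rho>) * cov_kernel M X s t"
    using scal by blast
  then show ?thesis using powr_2x[OF \<open>c > 0\<close>, of \<rho>] by (simp only:)
qed

lemma fixed_alpha:
  assumes al: "\<alpha> > 1"
  and hyp: "AE \<omega> in M. \<exists>\<^sub>F n in sequentially.
              X (\<alpha> ^ (n + 1)) \<omega> - X (\<alpha> ^ n) \<omega> >
              sqrt (2 * rv_variance M (\<lambda>\<omega>'. X (\<alpha> ^ (n + 1)) \<omega>' - X (\<alpha> ^ n) \<omega>')
                      * ln (ln (\<alpha> ^ (n + 1))))"
  shows "AE \<omega> in M. ereal (sqrt (cov_kernel M X 1 1) * (1 - (1 + sqrt 2) / \<alpha> powr \<rho>))
     \<le> Limsup at_top (\<lambda>s. ereal (X s \<omega> / sqrt (2 * s powr (2 * \<rho>) * ln (ln s))))"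
proof -
  define R where "R = cov_kernel M X"
  define \<sigma>2 where "\<sigma>2 = R 1 1"
  define \<sigma> where "\<sigma> = sqrt \<sigma>2"
  define a where "a = \<alpha> powr \<rho>"
  define v where "v = R \<alpha> \<alpha> - 2 * R \<alpha> 1 + \<sigma>2"
  have s2: "\<sigma>2 \<ge> 0" unfolding \<sigma>2_def R_def by (rule gp_cov_nonneg[OF P G])
  have sg: "\<sigma> \<ge> 0" unfolding \<sigma>_def using s2 by simp
  have a1: "a > 1" unfolding a_def using al rho by (simp add: gr_one_powr)
  have Rtt: "R t t = (t powr \<rho>)\<^sup>2 * \<sigma>2" if "t > 0" for t
    using scal'[of t 1 1] that unfolding R_def \<sigma>2_def by simp
  have Raa: "R \<alpha> \<alpha> = a\<^sup>2 * \<sigma>2" using Rtt[of \<alpha>] al unfolding a_def by simp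
  have R1a: "\<bar>R 1 (1/\<alpha>)\<bar> \<le> \<sigma>2 / a"
  proof -
    have ia: "(1/\<alpha>) powr \<rho> = 1 / a" unfolding a_def by (simp add: powr_divide)
    have "R (1/\<alpha>) (1/\<alpha>) = \<sigma>2 / a\<^sup>2" using Rtt[of "1/\<alpha>"] al ia by (simp add: power_divide)
    moreover have "\<bar>R 1 (1/\<alpha>)\<bar> \<le> ((1/a) * R 1 1 + R (1/\<alpha>) (1/\<alpha>) / (1/a)) / 2"
      unfolding R_def using al a1 by (intro gp_cov_bound[OF P G]) auto
    ultimately have "\<bar>R 1 (1/\<alpha>)\<bar> \<le> ((1/a) * \<sigma>2 + (\<sigma>2 / a\<^sup>2) / (1/a)) / 2" unfolding \<sigma>2_def by simp
    also have "\<dots> = \<sigma>2 / a" using a1 by (simp add: field_simps power2_eq_square)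
    finally show ?thesis .
  qed
  have Ra1: "\<bar>R \<alpha> 1\<bar> \<le> a * \<sigma>2"
  proof -
    have "R (\<alpha> * 1) (\<alpha> * (1/\<alpha>)) = a\<^sup>2 * R 1 (1/\<alpha>)"
      using scal'[of \<alpha> 1 "1/\<alpha>"] al unfolding R_def a_def by simp
    then have "R \<alpha> 1 = a\<^sup>2 * R 1 (1/\<alpha>)" using al by simp
    then have "\<bar>R \<alpha> 1\<bar> = a\<^sup>2 * \<bar>R 1 (1/\<alpha>)\<bar>" by (simp add: abs_mult)
    also have "\<dots> \<le> a\<^sup>2 * (\<sigma>2 / a)" using R1a by (intro mult_left_mono) auto
    also have "\<dots> = a * \<sigma>2" using a1 by (simp add: power2_eq_square)
    finally show ?thesis .
  qed
  have v_lb: "v \<ge> \<sigma>2 * (a - 1)\<^sup>2"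
  proof -
    have "v \<ge> a\<^sup>2 * \<sigma>2 - 2 * (a * \<sigma>2) + \<sigma>2" unfolding v_def using Raa Ra1 by (simp add: abs_le_iff)
    moreover have "a\<^sup>2 * \<sigma>2 - 2 * (a * \<sigma>2) + \<sigma>2 = \<sigma>2 * (a - 1)\<^sup>2" by (simp add: power2_eq_square algebra_simps)
    ultimately show ?thesis by simp
  qed
  have sv: "sqrt v \<ge> \<sigma> * (a - 1)"
  proof -
    have "sqrt (\<sigma>2 * (a - 1)\<^sup>2) \<le> sqrt v" using v_lb by simp
    then show ?thesis unfolding \<sigma>_def using a1 by (simp add: real_sqrt_mult)
  qed
  define t where "t n = \<alpha> ^ n" for n
  define b where "b n = t n powr \<rho>" for n
  have tpos: "t n > 0" for n unfolding t_def using al by simp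
  have bpos: "b n > 0" for n unfolding b_def using tpos[of n] by simp
  have tS: "t (Suc n) = t n * \<alpha>" for n unfolding t_def by (simp add: power_Suc2)
  have bS: "b (Suc n) = b n * a" for n unfolding b_def a_def tS by (rule powr_mult)
  have Xm[measurable]: "X (t n) \<in> borel_measurable M" for n using gp_meas[OF P G] tpos[of n] by simp
  have Rtn: "R (t n) (t n) = (b n)\<^sup>2 * \<sigma>2" for n using Rtt[OF tpos[of n]] unfolding b_def by simp
  have Esq: "sqrt (expectation (\<lambda>\<omega>. (X (t n) \<omega>)\<^sup>2)) = b n * \<sigma>" for n
  proof -
    have "expectation (\<lambda>\<omega>. (X (t n) \<omega>)\<^sup>2) = R (t n) (t n)"
      unfolding R_def cov_kernel_def by (simp add: power2_eq_square)
    then show ?thesis using Rtn[of n] bpos[of n] s2 unfolding \<sigma>_def by (simp add: real_sqrt_mult)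
  qed
  have gam: "rv_variance M (\<lambda>\<omega>'. X (\<alpha> ^ (n + 1)) \<omega>' - X (\<alpha> ^ n) \<omega>') = (b n)\<^sup>2 * v" for n
  proof -
    have "rv_variance M (\<lambda>\<omega>'. X (t n * \<alpha>) \<omega>' - X (t n * 1) \<omega>') =
      R (t n * \<alpha>) (t n * \<alpha>) - 2 * R (t n * \<alpha>) (t n * 1) + R (t n * 1) (t n * 1)"
      unfolding R_def using tpos[of n] al by (intro gp_var_diff[OF P G]) auto
    also have "\<dots> = (b n)\<^sup>2 * R \<alpha> \<alpha> - 2 * ((b n)\<^sup>2 * R \<alpha> 1) + (b n)\<^sup>2 * R 1 1"
      unfolding R_def b_def using tpos[of n] al by (simp only: scal')
    also have "\<dots> = (b n)\<^sup>2 * v" unfolding v_def \<sigma>2_def by (simp add: algebra_simps)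
    finally show ?thesis unfolding t_def by (simp only: power_Suc2[symmetric] Suc_eq_plus1 mult_1_right)
  qed
  define L where "L n = ln (ln (\<alpha> ^ n))" for n
  have la: "ln \<alpha> > 0" using al by simp
  obtain N0 :: nat where N0: "exp 1 / ln \<alpha> < real N0" using reals_Archimedean2 by blast
  define N where "N = max N0 1"
  have lnt: "ln (\<alpha> ^ n) = real n * ln \<alpha>" for n using al by (simp add: ln_realpow)
  have nla: "exp 1 \<le> real n * ln \<alpha>" if "n \<ge> N" for n
  proof -
    have "exp 1 < real N0 * ln \<alpha>" using N0 la by (simp add: divide_less_eq)
    also have "\<dots> \<le> real n * ln \<alpha>" using that la unfolding N_def by (intro mult_right_mono) auto
    finally show ?thesis by simp
  qed
  have LN: "L n \<ge> 1" if "n \<ge> N" for n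
  proof -
    have "ln (exp 1) \<le> ln (real n * ln \<alpha>)" using nla[OF that] using exp_gt_zero[of 1] by (subst ln_le_cancel_iff) linarith+
    then show ?thesis unfolding L_def lnt by simp
  qed
  have Lmono: "L n \<le> L (n + 1)" if "n \<ge> N" for n
  proof -
    have p: "0 < real n * ln \<alpha>" using nla[OF that] exp_gt_zero[of 1] by linarith
    have "real n * ln \<alpha> \<le> real (n + 1) * ln \<alpha>" using la by (intro mult_right_mono) auto
    then have "ln (real n * ln \<alpha>) \<le> ln (real (n + 1) * ln \<alpha>)" using p by (subst ln_le_cancel_iff) auto
    then show ?thesis unfolding L_def lnt .
  qed
  define A where "A n = {\<omega>\<in>space M. \<bar>X (t n) \<omega>\<bar> > (2 * sqrt (L n)) * sqrt (expectation (\<lambda>\<omega>. (X (t n) \<omega>)\<^sup>2))}" for n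
  have Am[measurable]: "A n \<in> sets M" for n unfolding A_def by measurable
  have mA: "norm (measure M (A n)) \<le> 2 * inverse (real n ^ 2) * inverse ((ln \<alpha>)\<^sup>2)" if "n \<ge> N" for n
  proof -
    have "1 \<le> sqrt (L n)" using LN[OF that] by simp
    then have x1: "1 \<le> 2 * sqrt (L n)" by linarith
    have m1: "measure M (A n) \<le> 2 * exp (- (2 * sqrt (L n))\<^sup>2 / 2)"
      unfolding A_def by (rule normal_tail[OF gp_cn[OF P G] x1]) (use tpos[of n] in simp)
    have e1: "- (2 * sqrt (L n))\<^sup>2 / 2 = - (2 * L n)" using LN[OF that] by (simp add: power_mult_distrib)
    have e2: "exp (- (2 * L n)) = inverse ((real n * ln \<alpha>)\<^sup>2)"
      unfolding L_def lnt using nla[OF that] exp_gt_zero[of 1] by (intro exp_m2ln) linarith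
    have e3: "inverse ((real n * ln \<alpha>)\<^sup>2) = inverse (real n ^ 2) * inverse ((ln \<alpha>)\<^sup>2)"
      by (simp add: power_mult_distrib)
    have "measure M (A n) \<le> 2 * inverse (real n ^ 2) * inverse ((ln \<alpha>)\<^sup>2)"
      using m1 unfolding e1 e2 e3 by (simp add: mult.assoc)
    then show ?thesis by simp
  qed
  have summ: "summable (\<lambda>n. measure M (A n))"
  proof (rule summable_comparison_test'[OF _ mA])
    show "summable (\<lambda>n. 2 * inverse (real n ^ 2) * inverse ((ln \<alpha>)\<^sup>2))"
      using inverse_power_summable[of 2, where 'a=real] by (intro summable_mult2 summable_mult) auto
  qed
  have BC: "AE \<omega> in M. eventually (\<lambda>n. \<omega> \<in> space M - A n) sequentially"
    by (rule borel_cantelli_AE1[OF Am _ summ]) (simp add: less_top[symmetric])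
  have hlim: "filterlim (\<lambda>n. \<alpha> ^ (n + 1)) at_top sequentially"
  proof -
    have "filterlim (\<lambda>n. \<alpha> ^ Suc n) at_infinity sequentially"
      by (rule filterlim_compose[OF filterlim_realpow_sequentially_gt1 filterlim_Suc]) (use al in simp)
    then show ?thesis using al by (intro filterlim_at_infinity_imp_filterlim_at_top) auto
  qed
  define c where "c = \<sigma> * (1 - (1 + sqrt 2) / a)"
  define f where "f \<omega> s = X s \<omega> / sqrt (2 * s powr (2 * \<rho>) * ln (ln s))" for \<omega> s
  have "AE \<omega> in M. \<exists>\<^sub>F n in sequentially. c \<le> f \<omega> (\<alpha> ^ (n + 1))"
    using hyp BC
  proof eventually_elim
    case (elim \<omega>)
    have ev: "eventually (\<lambda>n. \<omega> \<in> space M - A n \<and> n \<ge> N) sequentially"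
      using elim(2) eventually_ge_at_top[of N] by (rule eventually_conj)
    from frequently_eventually_frequently[OF elim(1) ev]
    show ?case
    proof (rule frequently_elim1)
      fix n assume H: "X (\<alpha> ^ (n + 1)) \<omega> - X (\<alpha> ^ n) \<omega> >
              sqrt (2 * rv_variance M (\<lambda>\<omega>'. X (\<alpha> ^ (n + 1)) \<omega>' - X (\<alpha> ^ n) \<omega>')
                      * ln (ln (\<alpha> ^ (n + 1)))) \<and> \<omega> \<in> space M - A n \<and> n \<ge> N"
      then have nN: "n \<ge> N" and om: "\<omega> \<in> space M" "\<omega> \<notin> A n" by auto
      have h0: "\<bar>X (t n) \<omega>\<bar> \<le> 2 * sqrt (L n) * (b n * \<sigma>)"
        using om Esq[of n] unfolding A_def by auto
      have sq1: "sqrt (2 * ((b n)\<^sup>2 * v) * L (n + 1)) = sqrt 2 * b n * sqrt v * sqrt (L (n + 1))"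
        using bpos[of n] by (simp add: real_sqrt_mult)
      have h1: "X (\<alpha> ^ (n + 1)) \<omega> - X (t n) \<omega> > sqrt 2 * b n * sqrt v * sqrt (L (n + 1))"
        using H gam[of n] sq1 unfolding t_def L_def by simp
      have LN1: "L (n + 1) \<ge> 1" using LN[of "n+1"] nN by simp
      have "\<sigma> * (1 - (1 + sqrt 2) / a) \<le> X (\<alpha> ^ (n + 1)) \<omega> / (sqrt 2 * b n * a * sqrt (L (n + 1)))"
      proof (rule key_ineq[OF bpos a1 sg sv _ _ _ h0 h1])
        show "0 \<le> sqrt (L n)" using LN[OF nN] by simp
        show "sqrt (L n) \<le> sqrt (L (n + 1))" using Lmono[OF nN] by simp
        show "0 < sqrt (L (n + 1))" using LN1 by simp
      qed
      moreover have "sqrt (2 * (\<alpha> ^ (n + 1)) powr (2 * \<rho>) * ln (ln (\<alpha> ^ (n + 1)))) = sqrt 2 * b n * a * sqrt (L (n + 1))"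
      proof -
        have "(\<alpha> ^ (n + 1)) powr (2 * \<rho>) = (b (Suc n))\<^sup>2"
          unfolding b_def using powr_2x[OF tpos[of "Suc n"], of \<rho>] unfolding t_def by simp
        then have "(\<alpha> ^ (n + 1)) powr (2 * \<rho>) = (b n * a)\<^sup>2" unfolding bS .
        then have "sqrt (2 * (\<alpha> ^ (n + 1)) powr (2 * \<rho>) * ln (ln (\<alpha> ^ (n + 1)))) = sqrt (2 * (b n * a)\<^sup>2 * L (n + 1))"
          unfolding L_def by (simp only:)
        also have "\<dots> = sqrt 2 * b n * a * sqrt (L (n + 1))"
          using bpos[of n] a1 by (simp add: real_sqrt_mult)
        finally show ?thesis .
      qed
      ultimately show "c \<le> f \<omega> (\<alpha> ^ (n + 1))" unfolding c_def f_def by (simp only:)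
    qed
  qed
  then show ?thesis
  proof eventually_elim
    case (elim \<omega>)
    have "ereal c \<le> Limsup at_top (\<lambda>s. ereal (f \<omega> s))"
      by (rule limsup_freq[OF hlim elim])
    then show ?case unfolding c_def f_def \<sigma>_def \<sigma>2_def R_def a_def .
  qed
qed

end



theorem proposition3p3:
  fixes M :: "'a measure" and X :: "real \<Rightarrow> 'a \<Rightarrow> real" and \<rho> :: real
  assumes "prob_space M"
    and "centered_gaussian_process M X {0..}"
    and "\<forall>\<omega>\<in>space M. continuous_on {0..} (\<lambda>s. X s \<omega>)"
    and "\<rho> > 0"
    and "\<forall>c>0. \<forall>s>0. \<forall>t>0.
           cov_kernel M X (c * s) (c * t) = c powr (2 * \<rho>) * cov_kernel M X s t"
    and "\<exists>A. \<forall>\<alpha>>A. \<alpha> > 1 \<longrightarrow>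
           (AE \<omega> in M. \<exists>\<^sub>F n in sequentially.
              X (\<alpha> ^ (n + 1)) \<omega> - X (\<alpha> ^ n) \<omega> >
              sqrt (2 * rv_variance M (\<lambda>\<omega>'. X (\<alpha> ^ (n + 1)) \<omega>' - X (\<alpha> ^ n) \<omega>')
                      * ln (ln (\<alpha> ^ (n + 1)))))"
  shows "AE \<omega> in M.
           Limsup at_top (\<lambda>s. ereal (X s \<omega> / sqrt (2 * s powr (2 * \<rho>) * ln (ln s))))
             \<ge> ereal (sqrt (cov_kernel M X 1 1))"
proof -
  obtain A0 where A0: "\<forall>\<alpha>>A0. \<alpha> > 1 \<longrightarrow>
           (AE \<omega> in M. \<exists>\<^sub>F n in sequentially.
              X (\<alpha> ^ (n + 1)) \<omega> - X (\<alpha> ^ n) \<omega> >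
              sqrt (2 * rv_variance M (\<lambda>\<omega>'. X (\<alpha> ^ (n + 1)) \<omega>' - X (\<alpha> ^ n) \<omega>')
                      * ln (ln (\<alpha> ^ (n + 1)))))" using assms(6) by blast
  define C where "C = max A0 1 + 1"
  define al where "al k = C + real k" for k :: nat
  define \<sigma> where "\<sigma> = sqrt (cov_kernel M X 1 1)"
  define g where "g k = \<sigma> * (1 - (1 + sqrt 2) / al k powr \<rho>)" for k
  define F where "F \<omega> = Limsup at_top (\<lambda>s. ereal (X s \<omega> / sqrt (2 * s powr (2 * \<rho>) * ln (ln s))))" for \<omega>
  have alk: "al k > A0" "al k > 1" for k unfolding al_def C_def by auto
  have "\<forall>k. AE \<omega> in M. ereal (g k) \<le> F \<omega>"
  proof
    fix k
    show "AE \<omega> in M. ereal (g k) \<le> F \<omega>"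
      unfolding g_def F_def \<sigma>_def
      by (rule fixed_alpha[OF assms(1,2,4,5) alk(2)]) (use A0 alk in blast)
  qed
  then have AE: "AE \<omega> in M. \<forall>k. ereal (g k) \<le> F \<omega>" by (simp add: AE_all_countable)
  have alim: "filterlim al at_top sequentially"
    unfolding al_def by (intro filterlim_tendsto_add_at_top[OF tendsto_const] filterlim_real_sequentially)
  have "(\<lambda>k. al k powr (- \<rho>)) \<longlonglongrightarrow> 0"
    by (rule tendsto_neg_powr[OF _ alim]) (use assms(4) in simp)
  then have "(\<lambda>k. \<sigma> * (1 - (1 + sqrt 2) * al k powr (- \<rho>))) \<longlonglongrightarrow> \<sigma> * (1 - (1 + sqrt 2) * 0)"
    by (intro tendsto_intros)
  moreover have "(\<lambda>k. \<sigma> * (1 - (1 + sqrt 2) * al k powr (- \<rho>))) = g"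
    unfolding g_def by (rule ext) (simp only: powr_minus_divide times_divide_eq_right mult_1_right)
  ultimately have glim: "g \<longlonglongrightarrow> \<sigma>" by simp
  then have eglim: "(\<lambda>k. ereal (g k)) \<longlonglongrightarrow> ereal \<sigma>" by (simp add: lim_ereal)
  show ?thesis using AE
  proof eventually_elim
    case (elim \<omega>)
    have "ereal \<sigma> \<le> F \<omega>" by (rule LIMSEQ_le_const2[OF eglim]) (use elim in blast)
    then show ?case unfolding F_def \<sigma>_def .
  qed
qed


end
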